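(* For any tournament $\mathrel{W}$, every $\mathrel{W}$-efficient ranking is $\mathrel{W}$-unimprovable.
   Context: Let $\mathcal{X}$ be a finite set of alternatives. A proto-ranking is an irreflexive and transitive binary relation on $\mathcal{X}$; a ranking is a total proto-ranking; a tournament is a total and asymmetric binary relation on $\mathcal{X}$. The chair has a fixed preference $\succ$, a ranking on $\mathcal{X}$. Interaction: given a tournament $\mathrel{W}$, start from $R_0=\varnothing$; in each period with $R_{t-1}$ not total the chair offers a pair $\{x,y\}$ unranked by $R_{t-1}$, the winner is $x$ if $x\mathrel{W}y$ and $y$ otherwise, and $R_t$ is the transitive closure of $R_{t-1}\cup\{(\text{winner},\text{loser})\}$; stop when $R_t$ is total. A strategy assigns to each non-terminal history (sequence of (winner, loser) pairs) a pair unranked at it; its outcome under $\mathrel{W}$ is the final ranking. A ranking is $\mathrel{W}$-feasible if it is the outcome under $\mathrel{W}$ of some strategy. $R$ is more aligned with $\succ$ than $R'$ if for all $x\succ y$, $xR'y$ implies $xRy$. A ranking is $\mathrel{W}$-unimprovable if no other $\mathrel{W}$-feasible ranking is more aligned with $\succ$ than it. A ranking $R$ is $\mathrel{W}$-efficient if $x\succ y$ and $x\mathrel{W}y$ imply $xRy$. *)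

theory Defs
  imports Main
begin

definition proto_ranking :: "'a set \<Rightarrow> 'a rel \<Rightarrow> bool" where
  "proto_ranking X R \<longleftrightarrow> R \<subseteq> X \<times> X \<and> irrefl_on X R \<and> trans R"

definition ranking :: "'a set \<Rightarrow> 'a rel \<Rightarrow> bool" where
  "ranking X R \<longleftrightarrow> proto_ranking X R \<and> total_on X R"

definition tournament :: "'a set \<Rightarrow> 'a rel \<Rightarrow> bool" where
  "tournament X W \<longleftrightarrow> W \<subseteq> X \<times> X \<and> total_on X W
     \<and> (\<forall>x y. (x, y) \<in> W \<longrightarrow> (y, x) \<notin> W)"

definition unranked :: "'a set \<Rightarrow> 'a rel \<Rightarrow> 'a \<times> 'a \<Rightarrow> bool" where
  "unranked X R p \<longleftrightarrow> fst p \<in> X \<and> snd p \<in> X \<and> fst p \<noteq> snd p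
     \<and> (fst p, snd p) \<notin> R \<and> (snd p, fst p) \<notin> R"

text \<open>Relation generated by a history (list of (winner, loser) pairs):
  R_0 = {} and R_t = transitive closure of R_{t-1} plus the new pair.\<close>
definition hist_rel :: "('a \<times> 'a) list \<Rightarrow> 'a rel" where
  "hist_rel h = foldl (\<lambda>R p. trancl (R \<union> {p})) {} h"

text \<open>Result of offering the pair {x,y} under W: (winner, loser).\<close>
definition contest :: "'a rel \<Rightarrow> 'a \<times> 'a \<Rightarrow> 'a \<times> 'a" where
  "contest W p = (if (fst p, snd p) \<in> W then (fst p, snd p) else (snd p, fst p))"

text \<open>A strategy assigns to every non-terminal history an unranked pair
  (the unordered pair {x,y} is represented by an ordered pair).\<close>
definition strategy :: "'a set \<Rightarrow> (('a \<times> 'a) list \<Rightarrow> 'a \<times> 'a) \<Rightarrow> bool" where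
  "strategy X \<sigma> \<longleftrightarrow> (\<forall>h. set h \<subseteq> X \<times> X \<longrightarrow> \<not> total_on X (hist_rel h)
      \<longrightarrow> unranked X (hist_rel h) (\<sigma> h))"

fun play :: "'a set \<Rightarrow> 'a rel \<Rightarrow> (('a \<times> 'a) list \<Rightarrow> 'a \<times> 'a) \<Rightarrow> nat \<Rightarrow> ('a \<times> 'a) list" where
  "play X W \<sigma> 0 = []"
| "play X W \<sigma> (Suc n) = (let h = play X W \<sigma> n in
      if total_on X (hist_rel h) then h else h @ [contest W (\<sigma> h)])"

definition outcome :: "'a set \<Rightarrow> 'a rel \<Rightarrow> (('a \<times> 'a) list \<Rightarrow> 'a \<times> 'a) \<Rightarrow> 'a rel \<Rightarrow> bool" where
  "outcome X W \<sigma> R \<longleftrightarrow> (\<exists>n. total_on X (hist_rel (play X W \<sigma> n)) \<and> R = hist_rel (play X W \<sigma> n))"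

definition feasible :: "'a set \<Rightarrow> 'a rel \<Rightarrow> 'a rel \<Rightarrow> bool" where
  "feasible X W R \<longleftrightarrow> ranking X R \<and> (\<exists>\<sigma>. strategy X \<sigma> \<and> outcome X W \<sigma> R)"

text \<open>R is more aligned with P (the chair's preference) than R'.\<close>
definition more_aligned :: "'a rel \<Rightarrow> 'a rel \<Rightarrow> 'a rel \<Rightarrow> bool" where
  "more_aligned P R R' \<longleftrightarrow> (\<forall>x y. (x, y) \<in> P \<longrightarrow> (x, y) \<in> R' \<longrightarrow> (x, y) \<in> R)"

definition unimprovable :: "'a set \<Rightarrow> 'a rel \<Rightarrow> 'a rel \<Rightarrow> 'a rel \<Rightarrow> bool" where
  "unimprovable X P W R \<longleftrightarrow> ranking X R \<and>
     \<not> (\<exists>R'. feasible X W R' \<and> R' \<noteq> R \<and> more_aligned P R' R)"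

definition efficient :: "'a set \<Rightarrow> 'a rel \<Rightarrow> 'a rel \<Rightarrow> 'a rel \<Rightarrow> bool" where
  "efficient X P W R \<longleftrightarrow> ranking X R \<and>
     (\<forall>x y. (x, y) \<in> P \<longrightarrow> (x, y) \<in> W \<longrightarrow> (x, y) \<in> R)"

end

theory Submission
  imports Defs
begin

lemma foldl_trancl:
  "trans A \<Longrightarrow> foldl (\<lambda>R p. trancl (R \<union> {p})) A h = trancl (A \<union> set h)"
proof (induction h arbitrary: A)
  case Nil
  then show ?case by simp
next
  case (Cons p h)
  have "foldl (\<lambda>R p. trancl (R \<union> {p})) A (p # h)
      = foldl (\<lambda>R p. trancl (R \<union> {p})) (trancl (A \<union> {p})) h" by simp
  also have "\<dots> = trancl (trancl (A \<union> {p}) \<union> set h)"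
    using Cons.IH[of "trancl (A \<union> {p})"] by simp
  also have "\<dots> = trancl (A \<union> set (p # h))"
    by (simp add: trancl_trancl_Un Un_assoc insert_commute)
  finally show ?case .
qed

lemma hist_rel_eq: "hist_rel h = trancl (set h)"
  unfolding hist_rel_def using foldl_trancl[of "{}" h] by (simp add: trans_def)

lemma play_sub:
  assumes "tournament X W" "strategy X \<sigma>"
  shows "set (play X W \<sigma> n) \<subseteq> W"
proof (induction n)
  case 0
  then show ?case by simp
next
  case (Suc n)
  define h where "h = play X W \<sigma> n"
  have hW: "set h \<subseteq> W" using Suc h_def by simp
  have WX: "W \<subseteq> X \<times> X" using assms(1) unfolding tournament_def by blast
  show ?case
  proof (cases "total_on X (hist_rel h)")
    case True
    then show ?thesis using hW by (simp add: h_def[symmetric] Let_def)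
  next
    case False
    have "set h \<subseteq> X \<times> X" using hW WX by blast
    then have u: "unranked X (hist_rel h) (\<sigma> h)"
      using assms(2) False unfolding strategy_def by blast
    obtain a b where ab: "\<sigma> h = (a, b)" by fastforce
    have "a \<in> X" "b \<in> X" "a \<noteq> b" using u ab unfolding unranked_def by auto
    then have "(a, b) \<in> W \<or> (b, a) \<in> W"
      using assms(1) unfolding tournament_def total_on_def by blast
    then have "contest W (\<sigma> h) \<in> W" using ab unfolding contest_def by auto
    then show ?thesis using hW False by (simp add: h_def[symmetric] Let_def)
  qed
qed

lemma rev_edge:
  assumes "(x, y) \<in> trancl S" "S \<subseteq> X \<times> X" "(y, x) \<in> R"
    and "trans R" "total_on X R"
  shows "\<exists>a b. (a, b) \<in> S \<and> (b, a) \<in> R"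
  using assms(1,3)
proof (induction arbitrary: rule: trancl_induct)
  case (base y)
  then show ?case by blast
next
  case (step z y)
  have "y \<in> X" "z \<in> X" using step(2) assms(2) by auto
  show ?case
  proof (cases "(y, z) \<in> R")
    case True
    then show ?thesis using step(2) by blast
  next
    case False
    then have "z = y \<or> (z, y) \<in> R" using assms(5) \<open>y \<in> X\<close> \<open>z \<in> X\<close>
      unfolding total_on_def by blast
    then have "(z, x) \<in> R" using step(4) assms(4) unfolding trans_def by blast
    then show ?thesis using step(3) by blast
  qed
qed

theorem lemma1:
  fixes X :: "'a set" and P W R :: "'a rel"
  assumes "finite X" and "ranking X P" and "tournament X W"
    and "efficient X P W R"
  shows "unimprovable X P W R"
proof -
  have rR: "ranking X R" using assms(4) unfolding efficient_def by blast
  have RX: "R \<subseteq> X \<times> X" and irR: "irrefl_on X R" and trR: "trans R" and toR: "total_on X R"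
    using rR unfolding ranking_def proto_ranking_def by auto
  have WX: "W \<subseteq> X \<times> X" using assms(3) unfolding tournament_def by blast
  have PX: "total_on X P" using assms(2) unfolding ranking_def by blast
  {
    fix R' assume f: "feasible X W R'" and ne: "R' \<noteq> R" and ma: "more_aligned P R' R"
    have R'X: "R' \<subseteq> X \<times> X" and irR': "irrefl_on X R'" and trR': "trans R'" and toR': "total_on X R'"
      using f unfolding feasible_def ranking_def proto_ranking_def by auto
    obtain \<sigma> n where s: "strategy X \<sigma>" and R'eq: "R' = hist_rel (play X W \<sigma> n)"
      using f unfolding feasible_def outcome_def by blast
    define S where "S = set (play X W \<sigma> n)"
    have SW: "S \<subseteq> W" using play_sub[OF assms(3) s] S_def by simp
    have R'S: "R' = trancl S" using R'eq hist_rel_eq S_def by simp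
    have "\<exists>x y. (x, y) \<in> R' \<and> (y, x) \<in> R"
    proof (cases "R \<subseteq> R'")
      case True
      have "\<not> R' \<subseteq> R" using True ne by blast
      then obtain x y where xy: "(x, y) \<in> R'" "(x, y) \<notin> R" by auto
      have "x \<in> X" "y \<in> X" "x \<noteq> y" using xy R'X irR' unfolding irrefl_on_def by auto
      then have "(y, x) \<in> R" using toR xy unfolding total_on_def by blast
      then show ?thesis using xy by blast
    next
      case False
      then obtain x y where xy: "(x, y) \<in> R" "(x, y) \<notin> R'" by auto
      have "x \<in> X" "y \<in> X" "x \<noteq> y" using xy RX irR unfolding irrefl_on_def by auto
      then have "(y, x) \<in> R'" using toR' xy unfolding total_on_def by blast
      then show ?thesis using xy by blast
    qed
    then obtain x y where "(x, y) \<in> trancl S" "(y, x) \<in> R" using R'S by blast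
    then obtain a b where ab: "(a, b) \<in> S" "(b, a) \<in> R"
      using rev_edge[of x y S X R] SW WX trR toR by blast
    have abR': "(a, b) \<in> R'" using ab R'S by auto
    have "a \<in> X" "b \<in> X" using ab SW WX by auto
    have "a \<noteq> b" using ab(2) irR \<open>a \<in> X\<close> unfolding irrefl_on_def by auto
    then have "(a, b) \<in> P \<or> (b, a) \<in> P" using PX \<open>a \<in> X\<close> \<open>b \<in> X\<close>
      unfolding total_on_def by blast
    then have False
    proof
      assume "(a, b) \<in> P"
      then have "(a, b) \<in> R" using assms(4) ab SW unfolding efficient_def by blast
      then have "(a, a) \<in> R" using ab(2) trR unfolding trans_def by blast
      then show False using irR \<open>a \<in> X\<close> unfolding irrefl_on_def by blast
    next
      assume "(b, a) \<in> P"
      then have "(b, a) \<in> R'" using ma ab(2) unfolding more_aligned_def by blast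
      then have "(a, a) \<in> R'" using abR' trR' unfolding trans_def by blast
      then show False using irR' \<open>a \<in> X\<close> unfolding irrefl_on_def by blast
    qed
  }
  then show ?thesis using rR unfolding unimprovable_def by blast
qed

end
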